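(* Let $B$ be an integral domain containing $A$ as a subring, let $f:A\to B$ be $\mathbb{F}_q$-linear, let $d$ be a non-negative integer, and let $\beta$ be a non-negative integer with base-$q$ expansion $\beta=\sum_{i=0}^e\beta_iq^i$ ($0\le\beta_i\le q-1$) such that $l(\beta)<q$. Then, in $\mathrm{Frac}(B)[z]$, $$M_d(f^\beta)(z)=M_d(1)^{1-l(\beta)}\prod_{i=0}^e\left(M_d(f^{q^i})(z)\right)^{\beta_i}.$$
   Context: $q$ is a power of a prime, $A=\mathbb{F}_q[\theta]$, $A_+(d)$ is the set of monic polynomials of degree $d$ in $A$. For a function $g:A\to B$, $M_d(g)(z):=\sum_{b\in A_+(d)} g(b)\prod_{a\in A_+(d)\setminus\{b\}}(z-a)\in B[z]$; $f^{m}$ denotes the function $a\mapsto f(a)^m$ (with $f^0=1$). $M_d(1)$ denotes $M_d$ applied to the constant function $1$; it is the nonzero constant $(-1)^dD_d/L_d\in A$, where $D_d$ is the product of all monic polynomials of degree $d$ and $L_d$ the lcm of all polynomials of degree $d$. $l(\beta):=\sum_i\beta_i$ is the sum of base-$q$ digits. *)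

theory Defs
  imports "HOL-Computational_Algebra.Polynomial" "HOL-Computational_Algebra.Fraction_Field" "HOL-Library.Cardinality"
begin

text \<open>A = F_q[theta] is the type 'a poly with 'a a finite field (q = CARD('a)).
  B is a type 'b of class idom, and iota : A -> B is an injective ring homomorphism
  (the inclusion of A as a subring of B).\<close>

definition monics :: "nat \<Rightarrow> 'a::{finite,field} poly set" where
  "monics d = {p. lead_coeff p = 1 \<and> degree p = d}"

definition Md :: "('a::{finite,field} poly \<Rightarrow> 'b::idom) \<Rightarrow> nat \<Rightarrow> ('a poly \<Rightarrow> 'b) \<Rightarrow> 'b poly" where
  "Md \<iota> d g = (\<Sum>b\<in>monics d. smult (g b) (\<Prod>a\<in>monics d - {b}. [:- \<iota> a, 1:]))"

definition frac_emb :: "'b::idom \<Rightarrow> 'b fract" where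
  "frac_emb x = Fract x 1"

end

theory Submission
  imports Defs
begin


lemma ff_fermat:
  fixes x :: "'a::{finite,field}"
  shows "x ^ CARD('a) = x"
proof (cases "x = 0")
  case True thus ?thesis by (simp add: power_0_left)
next
  case False
  let ?U = "UNIV - {0::'a}"
  have bij: "bij_betw (\<lambda>y. x * y) ?U ?U"
    by (rule bij_betw_byWitness[where f'="\<lambda>y. inverse x * y"]) (use False in auto)
  have "(\<Prod>y\<in>?U. x * y) = (\<Prod>y\<in>?U. y)"
    using prod.reindex_bij_betw[OF bij, of "\<lambda>y. y"] by simp
  moreover have "(\<Prod>y\<in>?U. x * y) = x ^ card ?U * (\<Prod>y\<in>?U. y)"
    by (simp add: prod.distrib)
  moreover have "(\<Prod>y\<in>?U. y) \<noteq> 0" by simp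
  ultimately have "x ^ card ?U = 1" by simp
  moreover have "card ?U = CARD('a) - 1" by (simp add: card_Diff_singleton)
  moreover have "CARD('a) > 0" by simp
  ultimately show ?thesis
    by (metis One_nat_def Suc_pred mult.right_neutral power_Suc)
qed

lemma ff_fermat_pow:
  fixes x :: "'a::{finite,field}"
  shows "x ^ (CARD('a) ^ i) = x"
proof (induction i)
  case (Suc i)
  have "x ^ (CARD('a) ^ Suc i) = (x ^ (CARD('a) ^ i)) ^ CARD('a)"
    by (simp add: power_mult[symmetric] mult.commute)
  thus ?case using Suc ff_fermat by simp
qed simp

lemma ff_card_ge2: "CARD('a::{finite,field}) \<ge> 2"
proof -
  have "{0::'a, 1} \<subseteq> UNIV" by simp
  hence "card {0::'a,1} \<le> CARD('a)" by (intro card_mono) auto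
  thus ?thesis by simp
qed

lemma ff_binom_zero:
  assumes "0 < k" "k < CARD('a::{finite,field})"
  shows "(of_nat (CARD('a) choose k) :: 'a) = 0"
proof -
  define q where "q = CARD('a)"
  have q2: "q \<ge> 2" unfolding q_def by (rule ff_card_ge2)
  have eq: "([:1,1:] :: 'a poly) ^ q = monom 1 q + 1"
  proof (rule poly_eqI_degree_lead_coeff[where n=q and A=UNIV])
    show "coeff ([:1,1:] ^ q) q = coeff (monom 1 q + 1 :: 'a poly) q"
      using q2 by (simp add: coeff_linear_power)
    show "q \<le> card (UNIV :: 'a set)" by (simp add: q_def)
    show "degree ([:1,1:] ^ q :: 'a poly) \<le> q"
      by (metis degree_linear_power order_refl)
    show "degree (monom 1 q + 1 :: 'a poly) \<le> q"
      by (metis degree_add_le degree_monom_le degree_1 le0)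
    fix z :: 'a
    show "poly ([:1,1:] ^ q) z = poly (monom 1 q + 1) z"
      by (simp add: poly_monom q_def ff_fermat add.commute)
  qed
  have "(of_nat (q choose k) :: 'a) = coeff (([:1,1:] :: 'a poly) ^ q) k"
    using assms coeff_linear_poly_power[of k q "1::'a" 1] by (simp add: q_def)
  also have "\<dots> = coeff (monom 1 q + 1 :: 'a poly) k"
    by (simp only: eq)
  also have "\<dots> = 0" using assms by (simp add: coeff_monom q_def)
  finally show ?thesis by (simp add: q_def)
qed




definition Vs :: "nat \<Rightarrow> 'a::zero poly set" where "Vs d = {p. \<forall>i\<ge>d. coeff p i = 0}"

lemma Vs_0: "Vs 0 = {0}"
  by (auto simp: Vs_def intro: poly_eqI)

lemma Vs_Suc: "Vs (Suc d) = (\<lambda>(c,v). pCons c v) ` (UNIV \<times> Vs d)"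
proof (intro equalityI subsetI)
  fix p :: "'a poly" assume p: "p \<in> Vs (Suc d)"
  obtain a r where pr: "p = pCons a r" by (cases p)
  have "r \<in> Vs d" using p unfolding pr Vs_def
    by (auto simp: coeff_pCons split: nat.splits)
  thus "p \<in> (\<lambda>(c,v). pCons c v) ` (UNIV \<times> Vs d)" using pr by force
next
  fix p :: "'a poly" assume "p \<in> (\<lambda>(c,v). pCons c v) ` (UNIV \<times> Vs d)"
  then obtain a r where pr: "p = pCons a r" and r: "r \<in> Vs d" by auto
  show "p \<in> Vs (Suc d)" unfolding pr Vs_def
  proof (safe)
    fix i assume "Suc d \<le> i"
    then obtain k where "i = Suc k" "d \<le> k" by (cases i) auto
    thus "coeff (pCons a r) i = 0" using r by (simp add: Vs_def)
  qed
qed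

lemma finite_card_Vs: "finite (Vs d :: 'a::{finite,zero} poly set) \<and> card (Vs d :: 'a poly set) = CARD('a) ^ d"
proof (induction d)
  case 0 thus ?case by (simp add: Vs_0)
next
  case (Suc d)
  have inj: "inj_on (\<lambda>(c,v). pCons c v) (UNIV \<times> (Vs d :: 'a poly set))"
    by (auto simp: inj_on_def)
  show ?case using Suc
    by (simp add: Vs_Suc card_image[OF inj] card_cartesian_product)
qed

lemma finite_Vs[simp]: "finite (Vs d :: 'a::{finite,zero} poly set)"
  using finite_card_Vs by blast
lemma card_Vs: "card (Vs d :: 'a::{finite,zero} poly set) = CARD('a) ^ d"
  using finite_card_Vs by blast

lemma Vs_0_in[simp]: "0 \<in> Vs d" by (simp add: Vs_def)
lemma Vs_add: "x \<in> Vs d \<Longrightarrow> y \<in> Vs d \<Longrightarrow> x + y \<in> Vs d" by (simp add: Vs_def)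
lemma Vs_diff: "x \<in> Vs d \<Longrightarrow> y \<in> Vs d \<Longrightarrow> (x::'a::ab_group_add poly) - y \<in> Vs d" by (simp add: Vs_def)
lemma Vs_smult: "x \<in> Vs d \<Longrightarrow> smult c x \<in> Vs d" by (simp add: Vs_def)
lemma Vs_monom: "j < d \<Longrightarrow> monom 1 j \<in> Vs d" by (simp add: Vs_def coeff_monom)

lemma monics_eq: "monics d = (\<lambda>v. monom 1 d + v) ` (Vs d :: 'a::{finite,field} poly set)"
proof (intro equalityI subsetI)
  fix p :: "'a poly" assume "p \<in> monics d"
  hence p: "lead_coeff p = 1" "degree p = d" by (auto simp: monics_def)
  have "p - monom 1 d \<in> Vs d" unfolding Vs_def
  proof safe
    fix i assume "d \<le> i"
    thus "coeff (p - monom 1 d) i = 0"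
      using p by (cases "i = d") (auto simp: coeff_monom coeff_eq_0)
  qed
  moreover have "p = monom 1 d + (p - monom 1 d)" by simp
  ultimately show "p \<in> (\<lambda>v. monom 1 d + v) ` Vs d" by blast
next
  fix p :: "'a poly" assume "p \<in> (\<lambda>v. monom 1 d + v) ` Vs d"
  then obtain v where pv: "p = monom 1 d + v" and v: "v \<in> Vs d" by auto
  have cd: "coeff p d = 1" using v by (simp add: pv Vs_def)
  have "degree p \<le> d"
    by (rule degree_le) (use v in \<open>auto simp: pv Vs_def coeff_monom\<close>)
  moreover have "d \<le> degree p" using cd by (intro le_degree) simp
  ultimately have "degree p = d" by simp
  thus "p \<in> monics d" using cd by (simp add: monics_def)
qed

lemma finite_monics[simp]: "finite (monics d :: 'a::{finite,field} poly set)"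
  by (simp add: monics_eq)

lemma card_monics: "card (monics d :: 'a::{finite,field} poly set) = CARD('a) ^ d"
  by (simp add: monics_eq card_image inj_on_def card_Vs)

definition Ws :: "nat \<Rightarrow> nat \<Rightarrow> 'a::zero poly set" where
  "Ws d j = {w \<in> Vs d. coeff w j = 0}"

lemma finite_Ws[simp]: "finite (Ws d j :: 'a::{finite,zero} poly set)"
  by (simp add: Ws_def)

lemma card_Ws:
  assumes "j < d"
  shows "card (Ws d j :: 'a::{finite,field} poly set) * CARD('a) = CARD('a) ^ d"
proof -
  let ?e = "monom 1 j :: 'a poly"
  have bij: "bij_betw (\<lambda>(c,w). smult c ?e + w) (UNIV \<times> Ws d j) (Vs d)"
  proof (rule bij_betw_byWitness[where f'="\<lambda>p. (coeff p j, p - smult (coeff p j) ?e)"])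
    show "\<forall>a\<in>UNIV \<times> Ws d j. (\<lambda>p. (coeff p j, p - smult (coeff p j) ?e)) ((\<lambda>(c,w). smult c ?e + w) a) = a"
      by (auto simp: Ws_def)
    show "\<forall>a'\<in>Vs d. (\<lambda>(c,w). smult c ?e + w) ((\<lambda>p. (coeff p j, p - smult (coeff p j) ?e)) a') = a'"
      by auto
    show "(\<lambda>(c,w). smult c ?e + w) ` (UNIV \<times> Ws d j) \<subseteq> Vs d"
      using assms by (auto simp: Ws_def intro!: Vs_add Vs_smult Vs_monom)
    show "(\<lambda>p. (coeff p j, p - smult (coeff p j) ?e)) ` Vs d \<subseteq> UNIV \<times> Ws d j"
      using assms by (auto simp: Ws_def intro!: Vs_diff Vs_smult Vs_monom)
  qed
  have "card (Vs d :: 'a poly set) = card ((UNIV::'a set) \<times> (Ws d j :: 'a poly set))"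
    using bij_betw_same_card[OF bij] by (rule sym)
  thus ?thesis by (simp add: card_Vs card_cartesian_product mult.commute)
qed

lemma card_Ws': "j < d \<Longrightarrow> card (Ws d j :: 'a::{finite,field} poly set) = CARD('a) ^ d div CARD('a)"
  using card_Ws[of j d] ff_card_ge2 by (metis nonzero_mult_div_cancel_right not_numeral_le_zero)




locale emb =
  fixes \<iota> :: "'a::{finite,field} poly \<Rightarrow> 'b::idom"
  assumes i_add: "\<And>x y. \<iota> (x + y) = \<iota> x + \<iota> y"
    and i_mult: "\<And>x y. \<iota> (x * y) = \<iota> x * \<iota> y"
    and i_one: "\<iota> 1 = 1"
    and i_inj: "inj \<iota>"
begin

lemma i_zero[simp]: "\<iota> 0 = 0"
  using i_add[of 0 0] by (metis add.right_neutral add_left_cancel)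

lemma i_diff: "\<iota> (x - y) = \<iota> x - \<iota> y"
  using i_add[of "x - y" y] by (simp add: algebra_simps)

lemma i_eq0[simp]: "\<iota> x = 0 \<longleftrightarrow> x = 0"
  using i_inj i_zero by (metis injD)

lemma i_prod: "\<iota> (prod g F) = (\<Prod>x\<in>F. \<iota> (g x))"
  by (induction F rule: infinite_finite_induct) (simp_all add: i_one i_mult)

lemma i_sum: "\<iota> (sum g F) = (\<Sum>x\<in>F. \<iota> (g x))"
  by (induction F rule: infinite_finite_induct) (simp_all add: i_add)

lemma i_power: "\<iota> (x ^ n) = \<iota> x ^ n"
  by (induction n) (simp_all add: i_one i_mult)

lemma i_of_nat: "\<iota> (of_nat n) = of_nat n"
  by (induction n) (simp_all add: i_one i_add)

lemma binom_zero_B: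
  assumes "0 < k" "k < CARD('a)"
  shows "(of_nat (CARD('a) choose k) :: 'b) = 0"
proof -
  have "(of_nat (CARD('a) choose k) :: 'b) = \<iota> (of_nat (CARD('a) choose k))"
    by (simp add: i_of_nat)
  also have "\<dots> = \<iota> [:of_nat (CARD('a) choose k):]" by (simp add: of_nat_poly)
  also have "\<dots> = 0" using ff_binom_zero[OF assms] by simp
  finally show ?thesis .
qed

lemma frob: "(a + b :: 'b) ^ CARD('a) = a ^ CARD('a) + b ^ CARD('a)"
proof -
  let ?q = "CARD('a)"
  let ?g = "\<lambda>k. of_nat (?q choose k) * a ^ k * b ^ (?q - k)"
  have q: "?q \<ge> 2" by (rule ff_card_ge2)
  have "(a + b) ^ ?q = (\<Sum>k\<le>?q. ?g k)" by (rule binomial_ring)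
  also have "\<dots> = (\<Sum>k\<in>{0, ?q}. ?g k)"
    by (rule sum.mono_neutral_right) (auto simp: binom_zero_B)
  also have "\<dots> = a ^ ?q + b ^ ?q" using q by simp
  finally show ?thesis .
qed

lemma frob_pow: "(a + b :: 'b) ^ (CARD('a) ^ i) = a ^ (CARD('a) ^ i) + b ^ (CARD('a) ^ i)"
proof (induction i)
  case (Suc i)
  have "(a + b) ^ (CARD('a) ^ Suc i) = ((a + b) ^ (CARD('a) ^ i)) ^ CARD('a)"
    by (simp add: power_mult[symmetric] mult.commute)
  also have "\<dots> = (a ^ (CARD('a) ^ i)) ^ CARD('a) + (b ^ (CARD('a) ^ i)) ^ CARD('a)"
    by (simp add: Suc frob)
  also have "\<dots> = a ^ (CARD('a) ^ Suc i) + b ^ (CARD('a) ^ Suc i)"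
    by (simp add: power_mult[symmetric] mult.commute)
  finally show ?case .
qed simp

lemma i_const_pow: "\<iota> [:c:] ^ (CARD('a) ^ i) = \<iota> [:c:]"
  by (simp add: i_power[symmetric] poly_const_pow ff_fermat_pow)

definition cA :: "nat \<Rightarrow> 'a poly" where "cA d = (\<Prod>w\<in>Vs d - {0}. w)"

lemma cA_nz: "cA d \<noteq> 0"
  by (simp add: cA_def)

lemma prod_diff_monics:
  assumes b: "b \<in> monics d"
  shows "(\<Prod>a\<in>monics d - {b}. b - a) = cA d"
proof -
  from b obtain v where v: "v \<in> Vs d" and bv: "b = monom 1 d + v" by (auto simp: monics_eq)
  have inj: "inj_on (\<lambda>a. b - a) (monics d - {b})" by (auto simp: inj_on_def)
  have img: "(\<lambda>a. b - a) ` (monics d - {b}) = Vs d - {0}"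
  proof (intro equalityI subsetI)
    fix w assume "w \<in> (\<lambda>a. b - a) ` (monics d - {b})"
    then obtain a where a: "a \<in> monics d" "a \<noteq> b" "w = b - a" by auto
    then obtain u where u: "u \<in> Vs d" "a = monom 1 d + u" by (auto simp: monics_eq)
    have "w = v - u" using a u bv by simp
    thus "w \<in> Vs d - {0}" using Vs_diff[OF v u(1)] a by auto
  next
    fix w :: "'a poly" assume w: "w \<in> Vs d - {0}"
    have "b - w = monom 1 d + (v - w)" using bv by simp
    hence "b - w \<in> monics d" using v w by (auto simp: monics_eq intro: Vs_diff)
    moreover have "w = b - (b - w)" by simp
    ultimately show "w \<in> (\<lambda>a. b - a) ` (monics d - {b})" using w by force
  qed
  show ?thesis
    using prod.reindex[OF inj, of "\<lambda>w. w"] img by (simp add: cA_def)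
qed

lemma Md_eval:
  assumes b: "b \<in> monics d"
  shows "poly (Md \<iota> d g) (\<iota> b) = g b * \<iota> (cA d)"
proof -
  have "poly (Md \<iota> d g) (\<iota> b) = (\<Sum>b'\<in>monics d. g b' * (\<Prod>a\<in>monics d - {b'}. \<iota> b - \<iota> a))"
    by (simp add: Md_def poly_sum poly_prod)
  also have "\<dots> = g b * (\<Prod>a\<in>monics d - {b}. \<iota> b - \<iota> a)
     + (\<Sum>b'\<in>monics d - {b}. g b' * (\<Prod>a\<in>monics d - {b'}. \<iota> b - \<iota> a))"
    by (rule sum.remove[OF finite_monics b])
  also have "(\<Sum>b'\<in>monics d - {b}. g b' * (\<Prod>a\<in>monics d - {b'}. \<iota> b - \<iota> a)) = 0"
  proof (rule sum.neutral, intro ballI)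
    fix b' assume "b' \<in> monics d - {b}"
    hence "b \<in> monics d - {b'}" using b by auto
    hence "(\<Prod>a\<in>monics d - {b'}. \<iota> b - \<iota> a) = 0"
      by (intro prod_zero) auto
    thus "g b' * (\<Prod>a\<in>monics d - {b'}. \<iota> b - \<iota> a) = 0" by simp
  qed
  also have "g b * (\<Prod>a\<in>monics d - {b}. \<iota> b - \<iota> a) + 0 = g b * (\<Prod>a\<in>monics d - {b}. \<iota> b - \<iota> a)" by simp
  also have "(\<Prod>a\<in>monics d - {b}. \<iota> b - \<iota> a) = \<iota> (\<Prod>a\<in>monics d - {b}. b - a)"
    by (simp add: i_prod i_diff)
  also have "\<dots> = \<iota> (cA d)" using prod_diff_monics[OF b] by simp
  finally show ?thesis .
qed

lemma Md_degree: "degree (Md \<iota> d g) < card (monics d :: 'a poly set)"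
proof -
  have pos: "card (monics d :: 'a poly set) > 0" by (simp add: card_monics)
  have "degree (Md \<iota> d g) \<le> card (monics d :: 'a poly set) - 1"
    unfolding Md_def
  proof (rule degree_sum_le[OF finite_monics])
    fix b :: "'a poly" assume b: "b \<in> monics d"
    have "degree (smult (g b) (\<Prod>a\<in>monics d - {b}. [:- \<iota> a, 1:])) \<le> degree (\<Prod>a\<in>monics d - {b}. [:- \<iota> a, 1:])"
      by (rule degree_smult_le)
    also have "\<dots> \<le> sum (degree \<circ> (\<lambda>a. [:- \<iota> a, 1:])) (monics d - {b})"
      by (rule degree_prod_sum_le) simp
    also have "\<dots> = card (monics d - {b})" by simp
    also have "\<dots> = card (monics d :: 'a poly set) - 1" using b by simp
    finally show "degree (smult (g b) (\<Prod>a\<in>monics d - {b}. [:- \<iota> a, 1:])) \<le> card (monics d :: 'a poly set) - 1" .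
  qed
  thus ?thesis using pos by linarith
qed

lemma Md_one: "Md \<iota> d (\<lambda>_. 1) = [:\<iota> (cA d):]"
proof (rule poly_eqI_degree[where A="\<iota> ` monics d"])
  fix x assume "x \<in> \<iota> ` monics d"
  then obtain b where "b \<in> monics d" "x = \<iota> b" by auto
  thus "poly (Md \<iota> d (\<lambda>_. 1)) x = poly [:\<iota> (cA d):] x" by (simp add: Md_eval)
next
  have c: "card (\<iota> ` monics d) = card (monics d :: 'a poly set)"
    by (rule card_image) (meson i_inj inj_on_subset subset_UNIV)
  show "degree (Md \<iota> d (\<lambda>_. 1)) < card (\<iota> ` monics d)" using Md_degree c by simp
  show "degree [:\<iota> (cA d):] < card (\<iota> ` monics d)" using c by (simp add: card_monics)
qed

end



lemma prod_Ws:
  fixes v :: "'a::{finite,field} poly"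
  assumes j: "j < d" and v: "v \<in> Vs d"
  shows "(\<Prod>w\<in>Ws d j. v - w) = smult (coeff v j) (\<Prod>w\<in>Ws d j. monom 1 j - w)"
proof -
  define x where "x = coeff v j"
  define e :: "'a poly" where "e = monom 1 j"
  define u where "u = v - smult x e"
  have u: "u \<in> Ws d j" using v j
    by (auto simp: u_def Ws_def x_def e_def intro!: Vs_diff Vs_smult Vs_monom)
  have W_closed: "a \<in> Ws d j \<Longrightarrow> b \<in> Ws d j \<Longrightarrow> a - b \<in> Ws d j" for a b :: "'a poly"
    by (simp add: Ws_def Vs_diff)
  have W_add: "a \<in> Ws d j \<Longrightarrow> b \<in> Ws d j \<Longrightarrow> a + b \<in> Ws d j" for a b :: "'a poly"
    by (auto simp: Ws_def intro: Vs_add)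
  have W_smult: "a \<in> Ws d j \<Longrightarrow> smult c a \<in> Ws d j" for a :: "'a poly" and c
    by (auto simp: Ws_def intro: Vs_smult)
  have "(\<Prod>w\<in>Ws d j. v - w) = (\<Prod>w\<in>Ws d j. smult x e - (w - u))"
    by (simp add: u_def)
  also have "\<dots> = (\<Prod>w\<in>(\<lambda>w. w - u) ` Ws d j. smult x e - w)"
    by (rule prod.reindex[symmetric, unfolded comp_def]) (auto simp: inj_on_def)
  also have "(\<lambda>w. w - u) ` Ws d j = Ws d j"
  proof (intro equalityI subsetI)
    fix w :: "'a poly" assume "w \<in> (\<lambda>w. w - u) ` Ws d j" thus "w \<in> Ws d j" using u W_closed by auto
  next
    fix w :: "'a poly" assume w: "w \<in> Ws d j"
    have "w = (w + u) - u" by simp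
    thus "w \<in> (\<lambda>w. w - u) ` Ws d j" using W_add[OF w u] by blast
  qed
  finally have eq1: "(\<Prod>w\<in>Ws d j. v - w) = (\<Prod>w\<in>Ws d j. smult x e - w)" .
  show ?thesis
  proof (cases "x = 0")
    case True
    have "(\<Prod>w\<in>Ws d j. smult x e - w) = 0"
      by (rule prod_zero) (use True in \<open>auto simp: Ws_def\<close>)
    thus ?thesis using eq1 True by (simp add: x_def)
  next
    case False
    have "(\<Prod>w\<in>Ws d j. smult x e - w) = (\<Prod>w\<in>(\<lambda>w. smult x w) ` Ws d j. smult x e - w)"
    proof -
      have "(\<lambda>w. smult x w) ` Ws d j = Ws d j"
      proof (intro equalityI subsetI)
        fix w :: "'a poly" assume "w \<in> (\<lambda>w. smult x w) ` Ws d j" thus "w \<in> Ws d j" using W_smult by auto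
      next
        fix w :: "'a poly" assume w: "w \<in> Ws d j"
        have "w = smult x (smult (inverse x) w)" using False by simp
        thus "w \<in> (\<lambda>w. smult x w) ` Ws d j" using W_smult[OF w] by blast
      qed
      thus ?thesis by simp
    qed
    also have "\<dots> = (\<Prod>w\<in>Ws d j. smult x e - smult x w)"
      by (rule prod.reindex[unfolded comp_def]) (use False in \<open>auto simp: inj_on_def smult_eq_iff\<close>)
    also have "\<dots> = (\<Prod>w\<in>Ws d j. [:x:] * (e - w))"
      by (simp add: smult_diff_right)
    also have "\<dots> = [:x:] ^ card (Ws d j :: 'a poly set) * (\<Prod>w\<in>Ws d j. e - w)"
      by (simp only: prod.distrib prod_constant)
    also have "[:x:] ^ card (Ws d j :: 'a poly set) = [:x:]"
    proof -
      have "card (Ws d j :: 'a poly set) = CARD('a) ^ (d - 1)"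
      proof -
        have "card (Ws d j :: 'a poly set) * CARD('a) = CARD('a) ^ (d - 1) * CARD('a)"
          using card_Ws[OF j] j by (metis Suc_diff_1 less_nat_zero_code not_gr_zero power_Suc2)
        thus ?thesis using ff_card_ge2[where 'a='a] by simp
      qed
      thus ?thesis by (simp add: poly_const_pow ff_fermat_pow)
    qed
    finally show ?thesis using eq1 by (simp add: x_def e_def)
  qed
qed

lemma Vs_expand:
  fixes v :: "'a::comm_ring_1 poly"
  assumes "v \<in> Vs d"
  shows "v = (\<Sum>j<d. smult (coeff v j) (monom 1 j))"
proof (rule poly_eqI)
  fix n
  have "coeff (\<Sum>j<d. smult (coeff v j) (monom 1 j)) n = (\<Sum>j<d. coeff v j * (if j = n then 1 else 0))"
    by (simp add: coeff_sum coeff_monom)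
  also have "\<dots> = (\<Sum>j<d. if j = n then coeff v j else 0)"
    by (rule sum.cong) auto
  also have "\<dots> = (if n < d then coeff v n else 0)" by (simp add: sum.delta)
  also have "\<dots> = coeff v n" using assms by (auto simp: Vs_def)
  finally show "coeff v n = coeff (\<Sum>j<d. smult (coeff v j) (monom 1 j)) n" by simp
qed

lemma fe_zero[simp]: "frac_emb 0 = 0" by (simp add: frac_emb_def Zero_fract_def)
lemma fe_one[simp]: "frac_emb 1 = 1" by (simp add: frac_emb_def One_fract_def)
lemma fe_add: "frac_emb (x + y) = frac_emb x + frac_emb y" by (simp add: frac_emb_def)
lemma fe_mult: "frac_emb (x * y) = frac_emb x * frac_emb y" by (simp add: frac_emb_def)
lemma fe_diff: "frac_emb (x - y) = frac_emb x - frac_emb y" by (simp add: frac_emb_def)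
lemma fe_eq[simp]: "frac_emb x = frac_emb y \<longleftrightarrow> x = y" by (simp add: frac_emb_def eq_fract)
lemma fe_eq0[simp]: "frac_emb x = 0 \<longleftrightarrow> x = 0" using fe_eq[of x 0] by simp
lemma fe_power: "frac_emb (x ^ n) = frac_emb x ^ n"
  by (induction n) (simp_all add: fe_mult)
lemma fe_prod: "frac_emb (prod g F) = (\<Prod>x\<in>F. frac_emb (g x))"
  by (induction F rule: infinite_finite_induct) (simp_all add: fe_mult)
lemma fe_sum: "frac_emb (sum g F) = (\<Sum>x\<in>F. frac_emb (g x))"
  by (induction F rule: infinite_finite_induct) (simp_all add: fe_add)

lemma poly_map_fe: "poly (map_poly frac_emb p) (frac_emb x) = frac_emb (poly p x)"
  by (induction p) (simp_all add: map_poly_pCons fe_add fe_mult)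

lemma degree_map_fe: "degree (map_poly frac_emb p) = degree p"
  by (rule degree_map_poly) simp




context emb begin

lemma card_img_monics: "card ((\<lambda>x. frac_emb (\<iota> x)) ` monics d) = card (monics d :: 'a poly set)"
  by (rule card_image) (auto simp: inj_on_def dest: injD[OF i_inj])

lemma Md_linear_degree:
  fixes h :: "'a poly \<Rightarrow> 'b"
  assumes h_add: "\<And>x y. h (x + y) = h x + h y"
    and h_smult: "\<And>c x. h (smult c x) = \<iota> [:c:] * h x"
  shows "degree (Md \<iota> d h) \<le> CARD('a) ^ d div CARD('a)"
proof -
  define \<kappa> where "\<kappa> x = frac_emb (\<iota> x)" for x
  define m :: "'a poly" where "m = monom 1 d"
  define P :: "nat \<Rightarrow> 'a poly" where "P j = (\<Prod>w\<in>Ws d j. monom 1 j - w)" for j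
  define E where "E j = (\<Prod>w\<in>(Ws d j :: 'a poly set). [:- \<kappa> (m + w), 1:])" for j
  define R where "R = [:frac_emb (h m):] + (\<Sum>j<d. smult (frac_emb (h (monom 1 j)) / \<kappa> (P j)) (E j))"
  define c where "c = \<kappa> (cA d)"
  define D where "D = CARD('a) ^ d div CARD('a)"
  have h0: "h 0 = 0" using h_add[of 0 0] by (metis add.right_neutral add_left_cancel)
  have h_sum: "h (sum g F) = (\<Sum>x\<in>F. h (g x))" for g :: "nat \<Rightarrow> 'a poly" and F
    by (induction F rule: infinite_finite_induct) (simp_all add: h0 h_add)
  have \<kappa>_diff: "\<kappa> (x - y) = \<kappa> x - \<kappa> y" for x y by (simp add: \<kappa>_def i_diff fe_diff)
  have \<kappa>_prod: "\<kappa> (prod g F) = (\<Prod>x\<in>F. \<kappa> (g x))" for g :: "'a poly \<Rightarrow> 'a poly" and F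
    by (simp add: \<kappa>_def i_prod fe_prod)
  have \<kappa>_mult: "\<kappa> (x * y) = \<kappa> x * \<kappa> y" for x y by (simp add: \<kappa>_def i_mult fe_mult)
  have P_nz: "P j \<noteq> 0" if "j < d" for j
  proof -
    have "monom 1 j - w \<noteq> 0" if "w \<in> Ws d j" for w :: "'a poly"
      using that by (auto simp: Ws_def)
    thus ?thesis by (simp add: P_def)
  qed
  have evalR: "poly R (\<kappa> b) = frac_emb (h b)" if b: "b \<in> monics d" for b
  proof -
    from b obtain v where v: "v \<in> Vs d" and bv: "b = m + v" by (auto simp: monics_eq m_def)
    have E_eval: "poly (E j) (\<kappa> b) = \<kappa> [:coeff v j:] * \<kappa> (P j)" if j: "j < d" for j
    proof -
      have "poly (E j) (\<kappa> b) = (\<Prod>w\<in>Ws d j. \<kappa> b - \<kappa> (m + w))"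
        by (simp add: E_def poly_prod)
      also have "\<dots> = (\<Prod>w\<in>Ws d j. \<kappa> (v - w))"
        by (rule prod.cong) (simp_all add: \<kappa>_diff[symmetric] bv)
      also have "\<dots> = \<kappa> (\<Prod>w\<in>Ws d j. v - w)" by (simp add: \<kappa>_prod)
      also have "\<dots> = \<kappa> ([:coeff v j:] * P j)"
        using prod_Ws[OF j v] by (simp add: P_def)
      finally show ?thesis using \<kappa>_mult[of "[:coeff v j:]" "P j"] by simp
    qed
    have "poly R (\<kappa> b) = frac_emb (h m) + (\<Sum>j<d. frac_emb (h (monom 1 j)) / \<kappa> (P j) * poly (E j) (\<kappa> b))"
      by (simp add: R_def poly_sum)
    also have "(\<Sum>j<d. frac_emb (h (monom 1 j)) / \<kappa> (P j) * poly (E j) (\<kappa> b))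
        = (\<Sum>j<d. frac_emb (h (smult (coeff v j) (monom 1 j))))"
    proof (rule sum.cong[OF refl])
      fix j assume "j \<in> {..<d}"
      hence j: "j < d" by simp
      have nz: "\<kappa> (P j) \<noteq> 0" using P_nz[OF j] by (simp add: \<kappa>_def)
      have "frac_emb (h (monom 1 j)) / \<kappa> (P j) * poly (E j) (\<kappa> b)
          = frac_emb (h (monom 1 j)) / \<kappa> (P j) * (\<kappa> [:coeff v j:] * \<kappa> (P j))"
        by (simp only: E_eval[OF j])
      also have "\<dots> = \<kappa> [:coeff v j:] * frac_emb (h (monom 1 j))"
        using nz by (simp add: field_simps)
      also have "\<dots> = frac_emb (h (smult (coeff v j) (monom 1 j)))"
        by (simp add: h_smult fe_mult \<kappa>_def)
      finally show "frac_emb (h (monom 1 j)) / \<kappa> (P j) * poly (E j) (\<kappa> b) = frac_emb (h (smult (coeff v j) (monom 1 j)))" .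
    qed
    also have "\<dots> = frac_emb (h v)"
      by (subst (2) Vs_expand[OF v]) (simp add: h_sum fe_sum)
    finally show ?thesis by (simp add: bv h_add fe_add)
  qed
  have degR: "degree R \<le> D"
  proof -
    have "degree (E j) \<le> D" if j: "j < d" for j
    proof -
      have "degree (E j) \<le> sum (degree \<circ> (\<lambda>w. [:- \<kappa> (m + w), 1:])) (Ws d j)"
        unfolding E_def by (rule degree_prod_sum_le) simp
      also have "\<dots> = card (Ws d j :: 'a poly set)" by simp
      also have "\<dots> = D" using card_Ws'[OF j] by (simp add: D_def)
      finally show ?thesis .
    qed
    hence "degree (\<Sum>j<d. smult (frac_emb (h (monom 1 j)) / \<kappa> (P j)) (E j)) \<le> D"
      by (intro degree_sum_le) (auto intro: order.trans[OF degree_smult_le])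
    thus ?thesis unfolding R_def
      by (metis degree_add_le degree_pCons_0 le0)
  qed
  have D_less: "D < card (monics d :: 'a poly set)"
  proof -
    have q: "CARD('a) \<ge> 2" by (rule ff_card_ge2)
    have "D \<le> CARD('a) ^ d div 2" unfolding D_def using q by (simp add: div_le_mono2)
    also have "\<dots> < CARD('a) ^ d" by simp
    finally show ?thesis by (simp add: card_monics)
  qed
  have eq: "map_poly frac_emb (Md \<iota> d h) = [:c:] * R"
  proof (rule poly_eqI_degree[where A="\<kappa> ` monics d"])
    fix x assume "x \<in> \<kappa> ` monics d"
    then obtain b where b: "b \<in> monics d" "x = \<kappa> b" by auto
    have "poly (map_poly frac_emb (Md \<iota> d h)) x = frac_emb (h b * \<iota> (cA d))"
      using b by (simp add: \<kappa>_def poly_map_fe Md_eval)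
    also have "\<dots> = c * poly R x" using b evalR by (simp add: fe_mult c_def \<kappa>_def mult.commute)
    finally show "poly (map_poly frac_emb (Md \<iota> d h)) x = poly ([:c:] * R) x" by simp
  next
    have cc: "card (\<kappa> ` monics d) = card (monics d :: 'a poly set)"
      unfolding \<kappa>_def by (rule card_img_monics)
    show "degree (map_poly frac_emb (Md \<iota> d h)) < card (\<kappa> ` monics d)"
      using Md_degree cc by (simp add: degree_map_fe)
    have "degree ([:c:] * R) \<le> degree R"
      by (metis degree_mult_le degree_pCons_0 add_0)
    thus "degree ([:c:] * R) < card (\<kappa> ` monics d)" using cc degR D_less by linarith
  qed
  have "degree (Md \<iota> d h) = degree ([:c:] * R)"
    using eq degree_map_fe by metis
  also have "\<dots> \<le> degree R" by (metis degree_mult_le degree_pCons_0 add_0)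
  finally show ?thesis using degR D_def by simp
qed

end



theorem corollary4p1p14:
  fixes \<iota> :: "'a::{finite,field} poly \<Rightarrow> 'b::idom"
    and f :: "'a poly \<Rightarrow> 'b"
    and d e \<beta> :: nat
    and \<beta>s :: "nat \<Rightarrow> nat"
  assumes iota_add: "\<And>x y. \<iota> (x + y) = \<iota> x + \<iota> y"
    and iota_mult: "\<And>x y. \<iota> (x * y) = \<iota> x * \<iota> y"
    and iota_one: "\<iota> 1 = 1"
    and iota_inj: "inj \<iota>"
    and f_add: "\<And>x y. f (x + y) = f x + f y"
    and f_smult: "\<And>c x. f (smult c x) = \<iota> [:c:] * f x"
    and digits: "\<And>i. i \<le> e \<Longrightarrow> \<beta>s i < CARD('a)"
    and expansion: "\<beta> = (\<Sum>i\<le>e. \<beta>s i * CARD('a) ^ i)"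
    and small: "(\<Sum>i\<le>e. \<beta>s i) < CARD('a)"
  shows "map_poly frac_emb (Md \<iota> d (\<lambda>a. f a ^ \<beta>)) =
           [: frac_emb (coeff (Md \<iota> d (\<lambda>_. 1)) 0) powi (1 - int (\<Sum>i\<le>e. \<beta>s i)) :] *
           (\<Prod>i\<le>e. (map_poly frac_emb (Md \<iota> d (\<lambda>a. f a ^ (CARD('a) ^ i)))) ^ \<beta>s i)"
proof -
  interpret emb \<iota> using iota_add iota_mult iota_one iota_inj by unfold_locales
  define q where "q = CARD('a)"
  define l where "l = (\<Sum>i\<le>e. \<beta>s i)"
  define h where "h i = (\<lambda>a. f a ^ (q ^ i))" for i
  define \<kappa> where "\<kappa> x = frac_emb (\<iota> x)" for x
  define c where "c = frac_emb (\<iota> (cA d))"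
  define D where "D = q ^ d div q"
  define S where "S = (monics d :: 'a poly set)"
  have q2: "q \<ge> 2" unfolding q_def by (rule ff_card_ge2)
  have c_nz: "c \<noteq> 0" by (simp add: c_def cA_nz)
  have c0: "coeff (Md \<iota> d (\<lambda>_. 1)) 0 = \<iota> (cA d)" by (simp add: Md_one)
  have degh: "degree (Md \<iota> d (h i)) \<le> D" for i
  proof (unfold D_def q_def, rule Md_linear_degree)
    fix x y show "h i (x + y) = h i x + h i y" by (simp add: h_def f_add q_def frob_pow)
  next
    fix c x show "h i (smult c x) = \<iota> [:c:] * h i x"
      by (simp add: h_def f_smult power_mult_distrib q_def i_const_pow)
  qed
  have D_less: "l * D < card S"
  proof (cases d)
    case 0 thus ?thesis using q2 by (simp add: D_def S_def card_monics q_def[symmetric])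
  next
    case (Suc k)
    have "D = q ^ k" using q2 by (simp add: D_def Suc)
    moreover have "l < q" using small by (simp add: l_def q_def)
    ultimately have "l * D < q * q ^ k" using q2 by simp
    thus ?thesis by (simp add: S_def card_monics Suc q_def[symmetric])
  qed
  have cardS: "card (\<kappa> ` S) = card S" unfolding \<kappa>_def S_def by (rule card_img_monics)
  show ?thesis
  proof (rule poly_eqI_degree[where A="\<kappa> ` S"])
    fix x assume "x \<in> \<kappa> ` S"
    then obtain b where b: "b \<in> monics d" "x = \<kappa> b" by (auto simp: S_def)
    define y where "y = frac_emb (f b)"
    have L: "poly (map_poly frac_emb (Md \<iota> d (\<lambda>a. f a ^ \<beta>))) x = y ^ \<beta> * c"
      using b by (simp add: \<kappa>_def poly_map_fe Md_eval y_def c_def fe_mult fe_power)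
    have Hi: "poly (map_poly frac_emb (Md \<iota> d (\<lambda>a. f a ^ (CARD('a) ^ i)))) x = y ^ (q ^ i) * c" for i
      using b by (simp add: \<kappa>_def poly_map_fe Md_eval y_def c_def fe_mult fe_power q_def)
    let ?RHS = "poly ([: frac_emb (coeff (Md \<iota> d (\<lambda>_. 1)) 0) powi (1 - int (\<Sum>i\<le>e. \<beta>s i)) :] *
           (\<Prod>i\<le>e. (map_poly frac_emb (Md \<iota> d (\<lambda>a. f a ^ (CARD('a) ^ i)))) ^ \<beta>s i)) x"
    have R1: "?RHS = c powi (1 - int l) * (\<Prod>i\<le>e. (y ^ (q ^ i) * c) ^ \<beta>s i)"
      by (simp add: c0 c_def l_def poly_prod Hi)
    have R2: "(\<Prod>i\<le>e. (y ^ (q ^ i) * c) ^ \<beta>s i) = y ^ \<beta> * c ^ l"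
    proof -
      have "(\<Prod>i\<le>e. (y ^ (q ^ i) * c) ^ \<beta>s i) = (\<Prod>i\<le>e. y ^ (\<beta>s i * q ^ i)) * (\<Prod>i\<le>e. c ^ \<beta>s i)"
        by (simp add: power_mult_distrib prod.distrib power_mult[symmetric] mult.commute)
      also have "\<dots> = y ^ \<beta> * c ^ l"
        by (simp add: power_sum[symmetric] expansion l_def q_def)
      finally show ?thesis .
    qed
    have R3: "c powi (1 - int l) * c powi int l = c"
    proof -
      have e1: "c powi ((1 - int l) + int l) = c powi (1 - int l) * c powi (int l)"
        by (rule power_int_add) (use c_nz in simp)
      have "(1 - int l) + int l = 1" by simp
      hence "c powi ((1 - int l) + int l) = c" by (simp only: power_int_1_right)
      with e1 show ?thesis by (simp only:)
    qed
    have R4: "c powi (1 - int l) * c ^ l = c" using R3 by (simp only: power_int_of_nat)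
    have "?RHS = c powi (1 - int l) * (y ^ \<beta> * c ^ l)" using R1 R2 by (simp only:)
    also have "\<dots> = y ^ \<beta> * (c powi (1 - int l) * c ^ l)" by (simp only: mult.left_commute)
    also have "\<dots> = y ^ \<beta> * c" by (simp only: R4)
    finally have R5: "?RHS = y ^ \<beta> * c" .
    show "poly (map_poly frac_emb (Md \<iota> d (\<lambda>a. f a ^ \<beta>))) x = ?RHS"
      using L R5 by (simp only:)
  next
    have "degree (map_poly frac_emb (Md \<iota> d (\<lambda>a. f a ^ \<beta>))) = degree (Md \<iota> d (\<lambda>a. f a ^ \<beta>))"
      by (rule degree_map_fe)
    moreover have "degree (Md \<iota> d (\<lambda>a. f a ^ \<beta>)) < card S"
      unfolding S_def by (rule Md_degree)
    ultimately show "degree (map_poly frac_emb (Md \<iota> d (\<lambda>a. f a ^ \<beta>))) < card (\<kappa> ` S)"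
      using cardS by linarith
  next
    let ?Q = "\<lambda>i. map_poly frac_emb (Md \<iota> d (\<lambda>a. f a ^ (CARD('a) ^ i)))"
    let ?P = "(\<Prod>i\<le>e. (map_poly frac_emb (Md \<iota> d (\<lambda>a. f a ^ (CARD('a) ^ i)))) ^ \<beta>s i)"
    have dQ: "degree (?Q i) \<le> D" for i
    proof -
      have "degree (?Q i) = degree (Md \<iota> d (h i))" by (simp only: degree_map_fe h_def q_def)
      thus ?thesis using degh[of i] by linarith
    qed
    have "degree ?P \<le> (\<Sum>i\<le>e. degree (?Q i ^ \<beta>s i))"
      using degree_prod_sum_le[of "{..e}" "\<lambda>i. ?Q i ^ \<beta>s i"] by (simp only: comp_def finite_atMost simp_thms)
    also have "\<dots> \<le> (\<Sum>i\<le>e. \<beta>s i * D)"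
    proof (rule sum_mono)
      fix i
      have "degree (?Q i ^ \<beta>s i) \<le> degree (?Q i) * \<beta>s i" by (rule degree_power_le)
      also have "\<dots> \<le> D * \<beta>s i" using dQ[of i] by (rule mult_right_mono) simp
      finally show "degree (?Q i ^ \<beta>s i) \<le> \<beta>s i * D" by (simp only: mult.commute)
    qed
    also have "\<dots> = l * D" by (simp only: l_def sum_distrib_right)
    finally have "degree ?P \<le> l * D" .
    hence dP: "degree ?P < card S" using D_less by linarith
    have "degree ([:z:] * ?P) \<le> degree ?P" for z :: "'b fract"
      using degree_mult_le[of "[:z:]" ?P] by (simp only: degree_pCons_0 add_0)
    thus "degree ([: frac_emb (coeff (Md \<iota> d (\<lambda>_. 1)) 0) powi (1 - int (\<Sum>i\<le>e. \<beta>s i)) :] * ?P)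
        < card (\<kappa> ` S)" using le_less_trans[OF _ dP] cardS by (simp only:)
  qed
qed


end
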